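(* Let $\delta\le\theta\le1$, let $\tilde S$ be a $\theta\times1\times1$ slab in $\mathbb{R}^3$, and let $\mathbb{S}$ be a finite set of $\delta\times1\times1$ slabs contained in $\tilde S$, with a shading $Y$ satisfying $\lambda(\mathbb{S},Y)\ge\delta^\eta$. If $\theta$ is a typical angle of intersection for $\mathbb{S}$, then $|U(\mathbb{S},Y)|\gtrsim\delta^{2\eta}|\tilde S|$.
   Context: A slab of dimensions $\theta\times1\times1$ is a convex set whose outer John ellipsoid has axes of lengths $\sim\theta,1,1$. The angle between two slabs is the angle between the planes spanned by their two longest axes (defined up to error $\delta$). A shading $Y$ assigns $Y(S)\subset S$; $U(\mathbb{S},Y)=\bigcup Y(S)$; $\lambda(\mathbb{S},Y)=\sum|Y(S)|/\sum|S|$. Let $Tri(\mathbb{S})=\{(x,S_1,S_2):x\in Y(S_1)\cap Y(S_2)\}$ with the product of Lebesgue measure in $x$ and counting measure in $(S_1,S_2)$, and $Tri_\theta(\mathbb{S})=\{(x,S_1,S_2)\in Tri(\mathbb{S}):\angle(S_1,S_2)\sim\theta\}$. $\theta$ is a typical angle of intersection for $\mathbb{S}$ if $|Tri_\theta(\mathbb{S})|\approx|Tri(\mathbb{S})|$ up to factors polylogarithmic in $1/\delta$. *)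

theory Defs
  imports "HOL-Analysis.Analysis"
begin

definition orthonormal3 :: "real^3 \<Rightarrow> real^3 \<Rightarrow> real^3 \<Rightarrow> bool" where
  "orthonormal3 n u v \<longleftrightarrow> norm n = 1 \<and> norm u = 1 \<and> norm v = 1 \<and>
     n \<bullet> u = 0 \<and> n \<bullet> v = 0 \<and> u \<bullet> v = 0"

definition box3 :: "real^3 \<Rightarrow> real^3 \<Rightarrow> real^3 \<Rightarrow> real^3 \<Rightarrow> real \<Rightarrow> real \<Rightarrow> (real^3) set" where
  "box3 c n u v a b = {x. \<bar>(x - c) \<bullet> n\<bar> \<le> a / 2 \<and> \<bar>(x - c) \<bullet> u\<bar> \<le> b / 2 \<and> \<bar>(x - c) \<bullet> v\<bar> \<le> b / 2}"

text \<open>K is an a x 1 x 1 slab (with implicit comparability constant A \<ge> 1) whose two longest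
  axes span the plane with unit normal n: K is convex and sandwiched between two concentric
  boxes of dimensions (a/A) x (1/A) x (1/A) and (A a) x A x A with the same axes.
  (Equivalent, up to the constant, to the outer John ellipsoid having axes ~ a, 1, 1.)\<close>
definition slab :: "real \<Rightarrow> real \<Rightarrow> (real^3) set \<Rightarrow> real^3 \<Rightarrow> bool" where
  "slab A a K n \<longleftrightarrow> convex K \<and>
     (\<exists>c u v. orthonormal3 n u v \<and> box3 c n u v (a / A) (1 / A) \<subseteq> K \<and> K \<subseteq> box3 c n u v (A * a) A)"

definition plane_angle :: "real^3 \<Rightarrow> real^3 \<Rightarrow> real" where
  "plane_angle n1 n2 = arccos \<bar>n1 \<bullet> n2\<bar>"

end

theory Submission
  imports Defs
begin


lemma sin_lb:
  fixes x :: real assumes "0 \<le> x" "x \<le> 1" shows "sin x \<ge> 5/6 * x"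
proof -
  have "\<bar>sin x - (\<Sum>m<3. sin_coeff m * x ^ m)\<bar> \<le> inverse (fact 3) * \<bar>x\<bar> ^ 3"
    by (rule Maclaurin_sin_bound)
  moreover have "(\<Sum>m<3. sin_coeff m * x ^ m) = x"
    by (simp add: eval_nat_numeral sin_coeff_def)
  moreover have "fact 3 = (6::real)" by (simp add: eval_nat_numeral)
  ultimately have "sin x \<ge> x - x^3/6" using assms by (simp add: field_simps abs_if split: if_splits)
  moreover have "x^3 \<le> x"
  proof -
    have "x*x \<le> 1" using assms mult_le_one by blast
    hence "x*x*x \<le> 1*x" using assms by (intro mult_right_mono) auto
    thus ?thesis by (simp add: power3_eq_cube)
  qed
  ultimately show ?thesis by linarith
qed

lemma parseval_exp:
  fixes n u v y :: "real^3"
  assumes "orthonormal3 n u v"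
  shows "y = (y \<bullet> n) *\<^sub>R n + (y \<bullet> u) *\<^sub>R u + (y \<bullet> v) *\<^sub>R v"
proof (rule ccontr)
  define z where "z = y - ((y \<bullet> n) *\<^sub>R n + (y \<bullet> u) *\<^sub>R u + (y \<bullet> v) *\<^sub>R v)"
  assume "\<not> ?thesis"
  hence z0: "z \<noteq> 0" unfolding z_def by simp
  have o: "norm n = 1" "norm u = 1" "norm v = 1" "n \<bullet> u = 0" "n \<bullet> v = 0" "u \<bullet> v = 0"
    using assms unfolding orthonormal3_def by auto
  have nn: "n \<bullet> n = 1" "u \<bullet> u = 1" "v \<bullet> v = 1" using o by (simp_all add: power2_norm_eq_inner[symmetric])
  have zn: "z \<bullet> n = 0" "z \<bullet> u = 0" "z \<bullet> v = 0"
    unfolding z_def using o nn by (simp_all add: inner_diff_left inner_add_left inner_commute[of u n] inner_commute[of v n] inner_commute[of v u])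
  have nz: "n \<noteq> 0" "u \<noteq> 0" "v \<noteq> 0" using o by auto
  have d: "n \<noteq> u" "n \<noteq> v" "u \<noteq> v" "z \<noteq> n" "z \<noteq> u" "z \<noteq> v" using o nn zn by auto
  have "pairwise orthogonal {n,u,v,z}"
    using o zn unfolding pairwise_def orthogonal_def by (auto simp: inner_commute)
  moreover have "0 \<notin> {n,u,v,z}" using nz z0 by auto
  ultimately have "independent {n,u,v,z}" by (rule pairwise_orthogonal_independent)
  hence "card {n,u,v,z} \<le> 3" using independent_bound by fastforce
  moreover have "card {n,u,v,z} = 4" using d by auto
  ultimately show False by simp
qed

lemma parseval_norm:
  fixes n u v y :: "real^3"
  assumes "orthonormal3 n u v"
  shows "norm y ^ 2 = (y \<bullet> n)^2 + (y \<bullet> u)^2 + (y \<bullet> v)^2"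
proof -
  have "norm y ^ 2 = y \<bullet> y" by (simp add: power2_norm_eq_inner)
  also have "\<dots> = y \<bullet> ((y \<bullet> n) *\<^sub>R n + (y \<bullet> u) *\<^sub>R u + (y \<bullet> v) *\<^sub>R v)"
    using parseval_exp[OF assms, of y] by simp
  also have "\<dots> = (y \<bullet> n)^2 + (y \<bullet> u)^2 + (y \<bullet> v)^2"
    by (simp add: inner_add_right power2_eq_square)
  finally show ?thesis .
qed



lemma prod_UNIV3: "prod f (UNIV::3 set) = f 1 * f 2 * f 3"
  unfolding UNIV_3 by (simp add: ac_simps)

lemma sq_le_of_abs: "\<bar>t::real\<bar> \<le> r \<Longrightarrow> t^2 \<le> r^2"
  by (metis abs_ge_zero order_trans power2_abs power_mono)

lemma box3_norm:
  assumes "orthonormal3 n u v" "x \<in> box3 c n u v a b"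
  shows "norm (x - c) ^ 2 \<le> (a/2)^2 + (b/2)^2 + (b/2)^2"
proof -
  have h: "\<bar>(x - c) \<bullet> n\<bar> \<le> a/2" "\<bar>(x - c) \<bullet> u\<bar> \<le> b/2" "\<bar>(x - c) \<bullet> v\<bar> \<le> b/2"
    using assms(2) unfolding box3_def by auto
  show ?thesis unfolding parseval_norm[OF assms(1), of "x - c"]
    using sq_le_of_abs[OF h(1)] sq_le_of_abs[OF h(2)] sq_le_of_abs[OF h(3)] by linarith
qed

lemma box3_compact:
  assumes "orthonormal3 n u v"
  shows "compact (box3 c n u v a b)"
proof (rule iffD2[OF compact_eq_bounded_closed], rule conjI)
  let ?r = "sqrt ((a/2)^2 + (b/2)^2 + (b/2)^2)"
  have "box3 c n u v a b \<subseteq> cball c ?r"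
  proof
    fix x assume "x \<in> box3 c n u v a b"
    hence "norm (x - c) ^ 2 \<le> (a/2)^2 + (b/2)^2 + (b/2)^2" by (rule box3_norm[OF assms])
    hence "norm (x - c) \<le> ?r" by (simp add: real_le_rsqrt)
    thus "x \<in> cball c ?r" by (simp add: dist_norm norm_minus_commute)
  qed
  thus "bounded (box3 c n u v a b)" using bounded_cball bounded_subset by blast
  show "closed (box3 c n u v a b)" unfolding box3_def
    by (intro closed_Collect_conj closed_Collect_le continuous_intros)
qed

lemma box3_lmeasurable:
  assumes "orthonormal3 n u v"
  shows "box3 c n u v a b \<in> lmeasurable"
  by (rule lmeasurable_compact[OF box3_compact[OF assms]])

lemma box3_measure:
  assumes on: "orthonormal3 n u v" and a: "0 \<le> a" and b: "0 \<le> b"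
  shows "measure lebesgue (box3 c n u v a b) = a * b * b"
proof -
  define L where "L x = (vector [x \<bullet> n, x \<bullet> u, x \<bullet> v] :: real^3)" for x :: "real^3"
  have Lc: "L x $ 1 = x \<bullet> n" "L x $ 2 = x \<bullet> u" "L x $ 3 = x \<bullet> v" for x
    by (simp_all add: L_def)
  have o: "norm n = 1" "norm u = 1" "norm v = 1" "n \<bullet> u = 0" "n \<bullet> v = 0" "u \<bullet> v = 0"
    using on unfolding orthonormal3_def by auto
  have nn: "n \<bullet> n = 1" "u \<bullet> u = 1" "v \<bullet> v = 1" using o by (simp_all add: power2_norm_eq_inner[symmetric])
  have lin: "linear L"
    by (rule linearI) (simp_all add: vec_eq_iff forall_3 Lc inner_add_left algebra_simps)
  have "norm (L x) = norm x" for x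
  proof -
    have "norm (L x) ^ 2 = L x \<bullet> L x" by (simp add: power2_norm_eq_inner)
    also have "\<dots> = (L x $ 1) * (L x $ 1) + (L x $ 2) * (L x $ 2) + (L x $ 3) * (L x $ 3)"
      by (simp only: inner_vec_def sum_3 inner_real_def)
    also have "\<dots> = (x \<bullet> n)^2 + (x \<bullet> u)^2 + (x \<bullet> v)^2"
      by (simp only: Lc power2_eq_square)
    also have "\<dots> = norm x ^ 2" using parseval_norm[OF on] by simp
    finally show ?thesis by (simp add: power2_eq_iff_nonneg)
  qed
  hence ot: "orthogonal_transformation L" using lin by (simp add: orthogonal_transformation)
  define h where "h = (vector [a/2, b/2, b/2] :: real^3)"
  have hc: "h $ 1 = a/2" "h $ 2 = b/2" "h $ 3 = b/2" by (simp_all add: h_def)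
  have img: "L ` box3 c n u v a b = cbox (L c - h) (L c + h)"
  proof
    show "L ` box3 c n u v a b \<subseteq> cbox (L c - h) (L c + h)"
    proof
      fix y assume "y \<in> L ` box3 c n u v a b"
      then obtain x where x: "x \<in> box3 c n u v a b" "y = L x" by auto
      have "\<bar>x \<bullet> n - c \<bullet> n\<bar> \<le> a/2" "\<bar>x \<bullet> u - c \<bullet> u\<bar> \<le> b/2" "\<bar>x \<bullet> v - c \<bullet> v\<bar> \<le> b/2"
        using x(1) unfolding box3_def by (auto simp: inner_diff_left)
      hence "c \<bullet> n - a/2 \<le> x \<bullet> n \<and> x \<bullet> n \<le> c \<bullet> n + a/2 \<and> c \<bullet> u - b/2 \<le> x \<bullet> u \<and> x \<bullet> u \<le> c \<bullet> u + b/2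
         \<and> c \<bullet> v - b/2 \<le> x \<bullet> v \<and> x \<bullet> v \<le> c \<bullet> v + b/2" by linarith
      thus "y \<in> cbox (L c - h) (L c + h)"
        unfolding mem_box_cart forall_3 using x(2) by (simp add: Lc hc)
    qed
    show "cbox (L c - h) (L c + h) \<subseteq> L ` box3 c n u v a b"
    proof
      fix y assume y: "y \<in> cbox (L c - h) (L c + h)"
      define x where "x = c + (y$1 - c \<bullet> n) *\<^sub>R n + (y$2 - c \<bullet> u) *\<^sub>R u + (y$3 - c \<bullet> v) *\<^sub>R v"
      have xn: "(x - c) \<bullet> n = y$1 - c \<bullet> n" "(x - c) \<bullet> u = y$2 - c \<bullet> u" "(x - c) \<bullet> v = y$3 - c \<bullet> v"
        unfolding x_def using o nn
        by (simp_all add: inner_add_left inner_commute[of u n] inner_commute[of v n] inner_commute[of v u])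
      have "L x = y" unfolding vec_eq_iff forall_3 Lc using xn by (simp add: inner_diff_left)
      moreover have "x \<in> box3 c n u v a b"
      proof -
        have "c \<bullet> n - a/2 \<le> y$1 \<and> y$1 \<le> c \<bullet> n + a/2 \<and> c \<bullet> u - b/2 \<le> y$2 \<and> y$2 \<le> c \<bullet> u + b/2
         \<and> c \<bullet> v - b/2 \<le> y$3 \<and> y$3 \<le> c \<bullet> v + b/2"
          using y unfolding mem_box_cart forall_3 by (simp add: Lc hc)
        thus ?thesis unfolding box3_def mem_Collect_eq xn by linarith
      qed
      ultimately show "y \<in> L ` box3 c n u v a b" by blast
    qed
  qed
  have "measure lebesgue (box3 c n u v a b) = measure lebesgue (L ` box3 c n u v a b)"
    by (rule measure_orthogonal_image[OF ot box3_lmeasurable[OF on], symmetric])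
  also have "\<dots> = measure lborel (cbox (L c - h) (L c + h))" using img by simp
  also have "\<dots> = a * b * b"
  proof -
    have "L c \<in> cbox (L c - h) (L c + h)" using a b unfolding mem_box_cart forall_3 by (simp add: hc)
    hence "cbox (L c - h) (L c + h) \<noteq> {}" by auto
    hence "measure lborel (cbox (L c - h) (L c + h)) = (\<Prod>i\<in>UNIV. (L c + h)$i - (L c - h)$i)"
      by (rule content_cbox_cart)
    also have "\<dots> = a * b * b" unfolding prod_UNIV3 by (simp add: hc)
    finally show ?thesis .
  qed
  finally show ?thesis .
qed



lemma t2a: fixes M :: "real^3^3" shows "(M *v x) $ i = M $ i \<bullet> x"
  by (simp add: matrix_vector_mult_def inner_vec_def)

lemma t3: fixes n1 n2 e :: "real^3"
  shows "det (vector [n1, n2, e] :: real^3^3) = (cross3 n1 n2) \<bullet> e"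
proof -
  have "det (vector [n1, n2, e] :: real^3^3) = n1 \<bullet> (cross3 n2 e)" by (rule dot_cross_det[symmetric])
  also have "\<dots> = (cross3 n2 e) \<bullet> n1" by (rule inner_commute)
  also have "\<dots> = (cross3 e n1) \<bullet> n2" by (rule cross_triple)
  also have "\<dots> = (cross3 n1 n2) \<bullet> e" by (rule cross_triple)
  finally show ?thesis .
qed



lemma pair_measure:
  fixes n1 u1 v1 n2 u2 v2 c1 c2 :: "real^3"
  assumes on1: "orthonormal3 n1 u1 v1" and on2: "orthonormal3 n2 u2 v2"
    and A: "A \<ge> 1" and d: "0 \<le> d" "d \<le> 1" and s: "s > 0" "s^2 \<le> 1 - (n1 \<bullet> n2)^2"
  shows "measure lebesgue (box3 c1 n1 u1 v1 (A*d) A \<inter> box3 c2 n2 u2 v2 (A*d) A) \<le> 2*A^3*d^2/s"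
proof -
  define P where "P = box3 c1 n1 u1 v1 (A*d) A \<inter> box3 c2 n2 u2 v2 (A*d) A"
  have o1: "norm n1 = 1" "norm u1 = 1" "norm v1 = 1" using on1 unfolding orthonormal3_def by auto
  have o2: "norm n2 = 1" using on2 unfolding orthonormal3_def by auto
  define w where "w = cross3 n1 n2"
  define nw where "nw = norm w"
  have "nw^2 + (n1 \<bullet> n2)^2 = 1" using norm_cross_dot[of n1 n2] o1 o2 by (simp add: nw_def w_def)
  hence "s^2 \<le> nw^2" using s by linarith
  moreover have "nw \<ge> 0" by (simp add: nw_def)
  ultimately have snw: "s \<le> nw" by (rule power2_le_imp_le)
  hence nwpos: "nw > 0" using s by linarith
  define e where "e = (1/nw) *\<^sub>R w"
  have ne: "norm e = 1" using nwpos by (simp add: e_def nw_def)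
  have ew: "e \<bullet> w = nw"
  proof -
    have "e \<bullet> w = (1/nw) * (w \<bullet> w)" by (simp add: e_def)
    also have "w \<bullet> w = nw * nw" by (simp add: nw_def power2_norm_eq_inner[symmetric] power2_eq_square)
    finally show ?thesis using nwpos by simp
  qed
  define M where "M = (vector [n1, n2, e] :: real^3^3)"
  define f where "f x = M *v x" for x
  have fc: "f x $ 1 = n1 \<bullet> x" "f x $ 2 = n2 \<bullet> x" "f x $ 3 = e \<bullet> x" for x
    by (simp_all add: f_def M_def t2a)
  have lin: "linear f" unfolding f_def by simp
  have detM: "det (matrix f) = nw"
  proof -
    have "det (matrix f) = det M" unfolding f_def by simp
    also have "\<dots> = (cross3 n1 n2) \<bullet> e" unfolding M_def by (rule t3)
    also have "\<dots> = nw" using ew by (simp add: w_def inner_commute)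
    finally show ?thesis .
  qed
  have Pm: "P \<in> lmeasurable" unfolding P_def
    by (intro fmeasurable_Int_fmeasurable box3_lmeasurable[OF on1] fmeasurableD box3_lmeasurable[OF on2])
  define h where "h = (vector [A*d/2, A*d/2, A] :: real^3)"
  define p where "p = (vector [n1 \<bullet> c1, n2 \<bullet> c2, e \<bullet> c1] :: real^3)"
  have sub: "f ` P \<subseteq> cbox (p - h) (p + h)"
  proof
    fix y assume "y \<in> f ` P"
    then obtain x where x: "x \<in> P" "y = f x" by auto
    have b1: "x \<in> box3 c1 n1 u1 v1 (A*d) A" and b2: "x \<in> box3 c2 n2 u2 v2 (A*d) A" using x P_def by auto
    have "norm (x - c1) ^ 2 \<le> (A*d/2)^2 + (A/2)^2 + (A/2)^2" by (rule box3_norm[OF on1 b1])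
    moreover have "(A*d/2)^2 \<le> (A/2)^2" using A d by (intro power_mono) (auto simp: mult_le_cancel_left1)
    moreover have "A^2 \<ge> 0" by simp
    ultimately have "norm (x - c1) ^ 2 \<le> A^2" by (simp add: power_divide) (use zero_le_power2[of A] in linarith)
    hence "norm (x - c1) \<le> A" by (rule power2_le_imp_le) (use A in simp)
    moreover have "\<bar>e \<bullet> (x - c1)\<bar> \<le> norm (x - c1)" using Cauchy_Schwarz_ineq2[of e "x - c1"] ne by simp
    ultimately have t3: "\<bar>e \<bullet> x - e \<bullet> c1\<bar> \<le> A" by (simp add: inner_diff_right)
    have t1: "\<bar>n1 \<bullet> x - n1 \<bullet> c1\<bar> \<le> A*d/2" using b1 unfolding box3_def by (simp add: inner_diff_left inner_commute[of x n1] inner_commute[of c1 n1])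
    have t2: "\<bar>n2 \<bullet> x - n2 \<bullet> c2\<bar> \<le> A*d/2" using b2 unfolding box3_def by (simp add: inner_diff_left inner_commute[of x n2] inner_commute[of c2 n2])
    have "p$1 - h$1 \<le> y$1 \<and> y$1 \<le> p$1 + h$1 \<and> p$2 - h$2 \<le> y$2 \<and> y$2 \<le> p$2 + h$2 \<and> p$3 - h$3 \<le> y$3 \<and> y$3 \<le> p$3 + h$3"
      unfolding x(2) fc using t1 t2 t3 unfolding abs_le_iff by (simp add: p_def h_def; linarith)
    thus "y \<in> cbox (p - h) (p + h)" unfolding mem_box_cart forall_3 by simp
  qed
  have "nw * measure lebesgue P = measure lebesgue (f ` P)"
    using measure_linear_image[OF lin Pm] detM nwpos by simp
  also have "\<dots> \<le> measure lebesgue (cbox (p - h) (p + h))"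
    by (intro measure_mono_fmeasurable[OF sub] fmeasurableD measurable_linear_image[OF lin Pm]) auto
  also have "\<dots> = (A*d) * (A*d) * (2*A)"
  proof -
    have "p \<in> cbox (p - h) (p + h)" using A d unfolding mem_box_cart forall_3 by (simp add: h_def)
    hence "cbox (p - h) (p + h) \<noteq> {}" by auto
    hence "measure lborel (cbox (p - h) (p + h)) = (\<Prod>i\<in>UNIV. (p + h)$i - (p - h)$i)"
      by (rule content_cbox_cart)
    also have "\<dots> = (A*d) * (A*d) * (2*A)" unfolding prod_UNIV3 by (simp add: h_def)
    finally show ?thesis by simp
  qed
  finally have "nw * measure lebesgue P \<le> 2*A^3*d^2" by (simp add: power2_eq_square power3_eq_cube algebra_simps)
  hence "measure lebesgue P \<le> 2*A^3*d^2 / nw" using nwpos by (simp add: field_simps)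
  also have "\<dots> \<le> 2*A^3*d^2 / s" using snw s A by (intro divide_left_mono) auto
  finally show ?thesis unfolding P_def .
qed



lemma cs_lemma:
  fixes Y :: "nat \<Rightarrow> (real^3) set"
  assumes fin: "finite I" and Ym: "\<And>i. i \<in> I \<Longrightarrow> Y i \<in> lmeasurable"
    and Spos: "(\<Sum>i\<in>I. measure lebesgue (Y i)) > 0"
    and Tpos: "(\<Sum>p\<in>I \<times> I. measure lebesgue (Y (fst p) \<inter> Y (snd p))) > 0"
  shows "(\<Sum>i\<in>I. measure lebesgue (Y i))^2
         \<le> measure lebesgue (\<Union>i\<in>I. Y i) * (\<Sum>p\<in>I \<times> I. measure lebesgue (Y (fst p) \<inter> Y (snd p)))"
proof -
  define S where "S = (\<Sum>i\<in>I. measure lebesgue (Y i))"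
  define T where "T = (\<Sum>p\<in>I \<times> I. measure lebesgue (Y (fst p) \<inter> Y (snd p)))"
  define U where "U = (\<Union>i\<in>I. Y i)"
  define f where "f x = (\<Sum>i\<in>I. indicator (Y i) x :: real)" for x
  have Um: "U \<in> lmeasurable" unfolding U_def using fin Ym by (intro fmeasurable.finite_UN) auto
  have Im: "Y (fst p) \<inter> Y (snd p) \<in> lmeasurable" if "p \<in> I \<times> I" for p
    using that Ym by (intro fmeasurable_Int_fmeasurable fmeasurableD) auto
  have intY: "integrable lebesgue (indicator (Y i) :: real^3 \<Rightarrow> real)" if "i \<in> I" for i
    using Ym[OF that] by (intro integrable_real_indicator) (auto simp: fmeasurable_def)
  have intP: "integrable lebesgue (indicator (Y (fst p) \<inter> Y (snd p)) :: real^3 \<Rightarrow> real)" if "p \<in> I \<times> I" for p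
    using Im[OF that] by (intro integrable_real_indicator) (auto simp: fmeasurable_def)
  have intU: "integrable lebesgue (indicator U :: real^3 \<Rightarrow> real)"
    using Um by (intro integrable_real_indicator) (auto simp: fmeasurable_def)
  have f2: "f x ^ 2 = (\<Sum>p\<in>I \<times> I. indicator (Y (fst p) \<inter> Y (snd p)) x)" for x
  proof -
    have "f x ^ 2 = (\<Sum>i\<in>I. \<Sum>j\<in>I. indicator (Y i) x * indicator (Y j) x)"
      unfolding f_def power2_eq_square by (simp add: sum_product)
    also have "\<dots> = (\<Sum>p\<in>I \<times> I. indicator (Y (fst p)) x * indicator (Y (snd p)) x)"
      by (simp add: sum.cartesian_product split_beta)
    also have "\<dots> = (\<Sum>p\<in>I \<times> I. indicator (Y (fst p) \<inter> Y (snd p)) x)"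
      by (simp add: indicator_inter_arith)
    finally show ?thesis .
  qed
  have intf: "integrable lebesgue f" unfolding f_def using intY by auto
  have intf2: "integrable lebesgue (\<lambda>x. f x ^ 2)" unfolding f2 using intP by auto
  have If: "integral\<^sup>L lebesgue f = S"
    unfolding f_def S_def using intY by (simp add: integral_sum)
  have If2: "integral\<^sup>L lebesgue (\<lambda>x. f x ^ 2) = T"
    unfolding f2 T_def using intP by (simp add: integral_sum)
  have IU: "integral\<^sup>L lebesgue (indicator U :: real^3 \<Rightarrow> real) = measure lebesgue U" by simp
  have S0: "S > 0" and T0: "T > 0" using Spos Tpos S_def T_def by auto
  define t where "t = T / S"
  have t0: "t > 0" using S0 T0 by (simp add: t_def)
  have pw: "f x \<le> (1/(2*t)) * f x ^ 2 + (t/2) * indicator U x" for x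
  proof (cases "x \<in> U")
    case True
    have "0 \<le> (f x - t)^2" by simp
    hence "2 * t * f x \<le> f x ^ 2 + t^2" by (simp add: power2_eq_square algebra_simps)
    hence "f x \<le> (f x ^ 2 + t^2) / (2*t)" using t0 by (simp add: field_simps)
    thus ?thesis using True t0 by (simp add: field_simps power2_eq_square)
  next
    case False
    hence "\<And>i. i \<in> I \<Longrightarrow> x \<notin> Y i" unfolding U_def by auto
    hence "f x = 0" unfolding f_def by simp
    thus ?thesis using False t0 by simp
  qed
  have "S \<le> integral\<^sup>L lebesgue (\<lambda>x. (1/(2*t)) * f x ^ 2 + (t/2) * indicator U x)"
    unfolding If[symmetric] by (rule integral_mono) (use intf intf2 intU pw in auto)
  also have "\<dots> = (1/(2*t)) * T + (t/2) * measure lebesgue U"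
    using intf2 intU If2 by (simp add: integral_add)
  finally have "S \<le> (1/(2*t)) * T + (t/2) * measure lebesgue U" .
  hence "S \<le> S/2 + T / S / 2 * measure lebesgue U" using S0 T0 by (simp add: t_def field_simps)
  hence "S^2 \<le> measure lebesgue U * T" using S0 by (simp add: field_simps power2_eq_square)
  thus ?thesis unfolding S_def T_def U_def .
qed



lemma final_arith:
  fixes U S T Tt N D d A C th St P Q :: real
  assumes h1: "S^2 \<le> U * T" and T0: "T > 0" and h3: "T \<le> C * P * Tt"
    and h4: "Tt \<le> N^2 * (3*A^4*d^2/th)" and h5: "D*N*d/A^3 \<le> S"
    and D: "D > 0" and N: "N > 0" and d: "d > 0" and th: "th > 0" and A: "A \<ge> 1" and C: "C \<ge> 1"
    and P: "P \<ge> 1" and St0: "0 \<le> St" and St: "St \<le> A^3*th" and Q0: "0 \<le> Q" and Q: "Q \<le> 1/P"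
  shows "(1/(4*C*A^13)) * Q * D^2 * St \<le> U"
proof -
  define Tb where "Tb = C * P * (N^2 * (3*A^4*d^2/th))"
  have Tb: "T \<le> Tb" unfolding Tb_def 
  proof -
    have "C * P * Tt \<le> C * P * (N^2 * (3*A^4*d^2/th))" using h4 C P by (intro mult_left_mono) auto
    thus "T \<le> C * P * (N^2 * (3*A^4*d^2/th))" using h3 by linarith
  qed
  have Tbpos: "Tb > 0" using T0 Tb by linarith
  have "(D*N*d/A^3)^2 \<le> S^2" using h5 D N d A by (intro power_mono) auto
  also have "\<dots> \<le> U * T" by (rule h1)
  also have "\<dots> \<le> U * Tb"
  proof -
    have "0 \<le> U * T" using h1 zero_le_power2[of S] by linarith
    hence "U \<ge> 0" using T0 by (simp add: zero_le_mult_iff)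
    thus ?thesis using Tb by (simp add: mult_left_mono)
  qed
  finally have "(D*N*d/A^3)^2 / Tb \<le> U" using Tbpos by (simp add: pos_divide_le_eq)
  moreover have "(D*N*d/A^3)^2 / Tb = D^2 * th / (3 * C * P * A^10)"
    unfolding Tb_def using N d th A C P
    by (simp add: field_simps power2_eq_square eval_nat_numeral)
  ultimately have U1: "D^2 * th / (3 * C * P * A^10) \<le> U" by simp
  have "(1/(4*C*A^13)) * Q * D^2 * St \<le> (1/(4*C*A^13)) * (1/P) * D^2 * (A^3*th)"
    using Q Q0 St St0 C A P by (intro mult_mono) (auto)
  also have "\<dots> = D^2 * th / (4 * C * P * A^10)"
    using C A P by (simp add: field_simps eval_nat_numeral)
  also have "\<dots> \<le> D^2 * th / (3 * C * P * A^10)"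
    using C A P D th by (intro divide_left_mono mult_pos_pos) auto
  finally show ?thesis using U1 by linarith
qed



lemma angle_bound:
  fixes n1 n2 :: "real^3"
  assumes n: "norm n1 = 1" "norm n2 = 1" and x: "0 < x" "x \<le> 1" and ang: "x \<le> plane_angle n1 n2"
  shows "(5/6*x)^2 \<le> 1 - (n1 \<bullet> n2)^2"
proof -
  define t where "t = \<bar>n1 \<bullet> n2\<bar>"
  have t0: "0 \<le> t" and t1: "t \<le> 1" unfolding t_def using Cauchy_Schwarz_ineq2[of n1 n2] n by auto
  have "arccos t \<le> pi" using t0 t1 arccos_bounded by auto
  hence "cos (arccos t) \<le> cos x" using x ang unfolding plane_angle_def t_def[symmetric]
    by (intro cos_monotone_0_pi_le) auto
  hence "t \<le> cos x" using t0 t1 by simp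
  hence "t^2 \<le> (cos x)^2" using t0 by (intro power_mono) auto
  hence "t^2 \<le> 1 - (sin x)^2" by (simp add: cos_squared_eq)
  moreover have "(5/6*x)^2 \<le> (sin x)^2" using sin_lb[of x] x by (intro power_mono) auto
  moreover have "t^2 = (n1 \<bullet> n2)^2" unfolding t_def by simp
  ultimately show ?thesis by linarith
qed

lemma slab_meas:
  assumes "slab A a K n" "A \<ge> 1" "a \<ge> 0"
  shows "K \<in> lmeasurable" "a / A^3 \<le> measure lebesgue K" "measure lebesgue K \<le> A^3 * a"
proof -
  obtain c u v where on: "orthonormal3 n u v" and inn: "box3 c n u v (a / A) (1 / A) \<subseteq> K"
    and out: "K \<subseteq> box3 c n u v (A * a) A" and cv: "convex K"
    using assms(1) unfolding slab_def by blast
  have "bounded K" using out compact_imp_bounded[OF box3_compact[OF on]] bounded_subset by blast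
  thus Km: "K \<in> lmeasurable" using cv measurable_convex by blast
  have "measure lebesgue (box3 c n u v (a / A) (1 / A)) \<le> measure lebesgue K"
    by (intro measure_mono_fmeasurable[OF inn] fmeasurableD box3_lmeasurable[OF on] Km)
  moreover have "measure lebesgue (box3 c n u v (a / A) (1 / A)) = a / A^3"
    using assms by (subst box3_measure[OF on]) (auto simp: field_simps eval_nat_numeral)
  ultimately show "a / A^3 \<le> measure lebesgue K" by simp
  have "measure lebesgue K \<le> measure lebesgue (box3 c n u v (A * a) A)"
    by (intro measure_mono_fmeasurable[OF out] fmeasurableD box3_lmeasurable[OF on] Km)
  moreover have "measure lebesgue (box3 c n u v (A * a) A) = A^3 * a"
    using assms by (subst box3_measure[OF on]) (auto simp: field_simps eval_nat_numeral)
  ultimately show "measure lebesgue K \<le> A^3 * a" by simp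
qed

lemma pair_bound:
  assumes s1: "slab A d K1 n1" and s2: "slab A d K2 n2" and A: "A \<ge> 1" and d: "0 < d" "d \<le> th" "th \<le> 1"
    and ang: "th / A \<le> plane_angle n1 n2"
    and Y: "Y1 \<subseteq> K1" "Y2 \<subseteq> K2" "Y1 \<in> sets lebesgue" "Y2 \<in> sets lebesgue"
  shows "measure lebesgue (Y1 \<inter> Y2) \<le> 3 * A^4 * d^2 / th"
proof -
  obtain c1 u1 v1 where on1: "orthonormal3 n1 u1 v1" and out1: "K1 \<subseteq> box3 c1 n1 u1 v1 (A * d) A"
    using s1 unfolding slab_def by blast
  obtain c2 u2 v2 where on2: "orthonormal3 n2 u2 v2" and out2: "K2 \<subseteq> box3 c2 n2 u2 v2 (A * d) A"
    using s2 unfolding slab_def by blast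
  have nn: "norm n1 = 1" "norm n2 = 1" using on1 on2 unfolding orthonormal3_def by auto
  have th0: "th > 0" using d by linarith
  have x: "0 < th / A" "th / A \<le> 1" using th0 A d by (auto simp: field_simps)
  have sb: "(5/6*(th/A))^2 \<le> 1 - (n1 \<bullet> n2)^2" by (rule angle_bound[OF nn x ang])
  have sp: "5/6*(th/A) > 0" using x by simp
  have "measure lebesgue (Y1 \<inter> Y2) \<le> measure lebesgue (box3 c1 n1 u1 v1 (A*d) A \<inter> box3 c2 n2 u2 v2 (A*d) A)"
  proof (rule measure_mono_fmeasurable)
    show "Y1 \<inter> Y2 \<subseteq> box3 c1 n1 u1 v1 (A*d) A \<inter> box3 c2 n2 u2 v2 (A*d) A" using Y out1 out2 by auto
    show "Y1 \<inter> Y2 \<in> sets lebesgue" using Y by auto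
    show "box3 c1 n1 u1 v1 (A*d) A \<inter> box3 c2 n2 u2 v2 (A*d) A \<in> lmeasurable"
      by (intro fmeasurable_Int_fmeasurable box3_lmeasurable[OF on1] fmeasurableD box3_lmeasurable[OF on2])
  qed
  also have "\<dots> \<le> 2*A^3*d^2/(5/6*(th/A))"
    by (rule pair_measure[OF on1 on2 A]) (use d sp sb in auto)
  also have "\<dots> = 12/5 * A^4 * d^2 / th" using A th0 by (simp add: field_simps eval_nat_numeral)
  also have "\<dots> \<le> 3 * A^4 * d^2 / th" using A th0 by (intro divide_right_mono mult_right_mono) auto
  finally show ?thesis .
qed



theorem lemma6p8:
  fixes A C :: real
  assumes "A \<ge> 1" and "C \<ge> 1"
  shows "\<exists>K>0. \<forall>(\<delta>::real) (\<theta>::real) (\<eta>::real) (St :: (real^3) set) (I :: nat set)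
            (Sl :: nat \<Rightarrow> (real^3) set) (nrm :: nat \<Rightarrow> real^3) (Y :: nat \<Rightarrow> (real^3) set).
      0 < \<delta> \<and> \<delta> \<le> \<theta> \<and> \<theta> \<le> 1
      \<and> (\<exists>n0. slab A \<theta> St n0)
      \<and> finite I \<and> inj_on Sl I
      \<and> (\<forall>i\<in>I. slab A \<delta> (Sl i) (nrm i) \<and> Sl i \<subseteq> St)
      \<and> (\<forall>i\<in>I. Y i \<subseteq> Sl i \<and> Y i \<in> sets lebesgue)
      \<and> (\<Sum>i\<in>I. measure lebesgue (Y i)) / (\<Sum>i\<in>I. measure lebesgue (Sl i)) \<ge> \<delta> powr \<eta>
      \<and> (\<Sum>p\<in>{p\<in>I \<times> I. \<theta> / A \<le> plane_angle (nrm (fst p)) (nrm (snd p))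
                              \<and> plane_angle (nrm (fst p)) (nrm (snd p)) \<le> A * \<theta>}.
             measure lebesgue (Y (fst p) \<inter> Y (snd p)))
          \<ge> (1 / C) * (1 + ln (1 / \<delta>)) powr (- C) *
            (\<Sum>p\<in>I \<times> I. measure lebesgue (Y (fst p) \<inter> Y (snd p)))
      \<longrightarrow> measure lebesgue (\<Union>i\<in>I. Y i)
          \<ge> (1 / K) * (1 + ln (1 / \<delta>)) powr (- K) * \<delta> powr (2 * \<eta>) * measure lebesgue St"
proof (intro exI[of _ "4*C*A^13"] conjI allI impI)
  have A: "A \<ge> 1" and C: "C \<ge> 1" using assms by auto
  show "4*C*A^13 > 0" using A C by simp
  fix \<delta> \<theta> \<eta> :: real and St :: "(real^3) set" and I :: "nat set" and Sl :: "nat \<Rightarrow> (real^3) set"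
    and nrm :: "nat \<Rightarrow> real^3" and Y :: "nat \<Rightarrow> (real^3) set"
  let ?F = "{p\<in>I \<times> I. \<theta> / A \<le> plane_angle (nrm (fst p)) (nrm (snd p))
                              \<and> plane_angle (nrm (fst p)) (nrm (snd p)) \<le> A * \<theta>}"
  let ?g = "\<lambda>p. measure lebesgue (Y (fst p) \<inter> Y (snd p))"
  let ?L = "1 + ln (1 / \<delta>)"
  assume H: "0 < \<delta> \<and> \<delta> \<le> \<theta> \<and> \<theta> \<le> 1
      \<and> (\<exists>n0. slab A \<theta> St n0)
      \<and> finite I \<and> inj_on Sl I
      \<and> (\<forall>i\<in>I. slab A \<delta> (Sl i) (nrm i) \<and> Sl i \<subseteq> St)
      \<and> (\<forall>i\<in>I. Y i \<subseteq> Sl i \<and> Y i \<in> sets lebesgue)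
      \<and> (\<Sum>i\<in>I. measure lebesgue (Y i)) / (\<Sum>i\<in>I. measure lebesgue (Sl i)) \<ge> \<delta> powr \<eta>
      \<and> (\<Sum>p\<in>?F. ?g p) \<ge> (1 / C) * ?L powr (- C) * (\<Sum>p\<in>I \<times> I. ?g p)"
  have d0: "0 < \<delta>" and dth: "\<delta> \<le> \<theta>" and th1: "\<theta> \<le> 1" and fin: "finite I"
    using H by auto
  obtain n0 where sSt: "slab A \<theta> St n0" using H by auto
  have sl: "\<And>i. i \<in> I \<Longrightarrow> slab A \<delta> (Sl i) (nrm i)" using H by auto
  have Ysub: "\<And>i. i \<in> I \<Longrightarrow> Y i \<subseteq> Sl i" and Ysets: "\<And>i. i \<in> I \<Longrightarrow> Y i \<in> sets lebesgue" using H by auto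
  have ratio: "(\<Sum>i\<in>I. measure lebesgue (Y i)) / (\<Sum>i\<in>I. measure lebesgue (Sl i)) \<ge> \<delta> powr \<eta>"
    using H by blast
  have typc: "(\<Sum>p\<in>?F. ?g p) \<ge> (1 / C) * ?L powr (- C) * (\<Sum>p\<in>I \<times> I. ?g p)"
    using H by blast
  have th0: "\<theta> > 0" using d0 dth by linarith
  have L1: "?L \<ge> 1" using d0 dth th1 by simp
  define S where "S = (\<Sum>i\<in>I. measure lebesgue (Y i))"
  define T where "T = (\<Sum>p\<in>I \<times> I. ?g p)"
  define Tt where "Tt = (\<Sum>p\<in>?F. ?g p)"
  define N where "N = real (card I)"
  define D where "D = \<delta> powr \<eta>"
  have D0: "D > 0" using d0 by (simp add: D_def)
  have Slm: "\<And>i. i \<in> I \<Longrightarrow> Sl i \<in> lmeasurable" using slab_meas(1)[OF sl A] d0 by auto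
  have Slb: "\<And>i. i \<in> I \<Longrightarrow> \<delta> / A^3 \<le> measure lebesgue (Sl i)" using slab_meas(2)[OF sl A] d0 by auto
  have Ym: "\<And>i. i \<in> I \<Longrightarrow> Y i \<in> lmeasurable" using Slm Ysub Ysets by (blast intro: fmeasurableI2)
  have Ine: "I \<noteq> {}"
  proof
    assume "I = {}"
    hence "\<delta> powr \<eta> \<le> 0" using ratio by simp
    thus False using d0 by simp
  qed
  have N0: "N > 0" using Ine fin by (simp add: N_def card_gt_0_iff)
  have "N * (\<delta> / A^3) \<le> (\<Sum>i\<in>I. measure lebesgue (Sl i))"
    using sum_mono[of I "\<lambda>i. \<delta> / A^3" "\<lambda>i. measure lebesgue (Sl i)"] Slb by (simp add: N_def)
  moreover have "N * (\<delta> / A^3) > 0" using N0 d0 A by simp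
  ultimately have SlS: "N * (\<delta> / A^3) \<le> (\<Sum>i\<in>I. measure lebesgue (Sl i))" "(\<Sum>i\<in>I. measure lebesgue (Sl i)) > 0"
    by auto
  have "D * (\<Sum>i\<in>I. measure lebesgue (Sl i)) \<le> S"
    using ratio SlS(2) by (simp add: D_def S_def pos_le_divide_eq)
  moreover have "D * (N * (\<delta> / A^3)) \<le> D * (\<Sum>i\<in>I. measure lebesgue (Sl i))"
    using SlS D0 by (intro mult_left_mono) auto
  ultimately have Sb: "D*N*\<delta>/A^3 \<le> S" by simp
  have S0: "S > 0" using Sb D0 N0 d0 A by (smt (verit) divide_pos_pos mult_pos_pos zero_less_power)
  have TS: "S \<le> T"
  proof -
    have "S = (\<Sum>p\<in>(\<lambda>i. (i,i)) ` I. ?g p)"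
      unfolding S_def by (subst sum.reindex) (auto simp: inj_on_def)
    also have "\<dots> \<le> T" unfolding T_def using fin by (intro sum_mono2) auto
    finally show ?thesis .
  qed
  have T0: "T > 0" using TS S0 by linarith
  have CS: "S^2 \<le> measure lebesgue (\<Union>i\<in>I. Y i) * T"
    unfolding S_def T_def by (rule cs_lemma[OF fin Ym]) (use S0 T0 S_def T_def in auto)
  have Ttb: "Tt \<le> N^2 * (3*A^4*\<delta>^2/\<theta>)"
  proof -
    have "Tt \<le> real (card ?F) * (3*A^4*\<delta>^2/\<theta>)"
      unfolding Tt_def
    proof (rule sum_bounded_above)
      fix p assume "p \<in> ?F"
      hence p: "fst p \<in> I" "snd p \<in> I" "\<theta> / A \<le> plane_angle (nrm (fst p)) (nrm (snd p))" by auto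
      show "?g p \<le> 3*A^4*\<delta>^2/\<theta>"
        by (rule pair_bound[OF sl[OF p(1)] sl[OF p(2)] A d0 dth th1 p(3) Ysub[OF p(1)] Ysub[OF p(2)]
              Ysets[OF p(1)] Ysets[OF p(2)]])
    qed
    also have "\<dots> \<le> N^2 * (3*A^4*\<delta>^2/\<theta>)"
    proof (rule mult_right_mono)
      have "card ?F \<le> card (I \<times> I)" using fin by (intro card_mono) auto
      hence "card ?F \<le> card I * card I" by (simp add: card_cartesian_product)
      hence "real (card ?F) \<le> real (card I) * real (card I)" by (simp only: of_nat_mult[symmetric] of_nat_le_iff)
      thus "real (card ?F) \<le> N^2" by (simp add: N_def power2_eq_square)
      show "0 \<le> 3*A^4*\<delta>^2/\<theta>" using th0 by simp
    qed
    finally show ?thesis .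
  qed
  have LC: "?L powr C \<ge> 1" using L1 C by (simp add: ge_one_powr_ge_zero)
  have Tb: "T \<le> C * ?L powr C * Tt"
  proof -
    have "(1 / C) * ?L powr (- C) * T \<le> Tt" using typc by (simp add: T_def Tt_def)
    hence h: "T / (C * ?L powr C) \<le> Tt" by (simp add: powr_minus field_simps)
    have pos: "C * ?L powr C > 0" using C LC by (intro mult_pos_pos) auto
    have "T \<le> Tt * (C * ?L powr C)" using h pos by (simp add: pos_divide_le_eq)
    thus ?thesis by (simp add: algebra_simps)
  qed
  have Stm: "St \<in> lmeasurable" and Stb: "measure lebesgue St \<le> A^3 * \<theta>"
    using slab_meas[OF sSt A] th0 by auto
  have Q: "?L powr (- (4*C*A^13)) \<le> 1 / ?L powr C"
  proof -
    have "C \<le> 4*C*A^13" using C A by (smt (verit) mult_le_cancel_left1 one_le_power)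
    hence "?L powr (- (4*C*A^13)) \<le> ?L powr (- C)" using L1 by (intro powr_mono) auto
    thus ?thesis by (simp add: powr_minus divide_inverse)
  qed
  have "(1/(4*C*A^13)) * ?L powr (- (4*C*A^13)) * D^2 * measure lebesgue St \<le> measure lebesgue (\<Union>i\<in>I. Y i)"
    by (rule final_arith[OF CS T0 Tb Ttb Sb D0 N0 d0 th0 A C LC _ Stb _ Q]) auto
  moreover have "\<delta> powr (2 * \<eta>) = D^2" unfolding D_def
    by (simp add: power2_eq_square powr_add[symmetric])
  ultimately show "measure lebesgue (\<Union>i\<in>I. Y i)
          \<ge> (1 / (4*C*A^13)) * ?L powr (- (4*C*A^13)) * \<delta> powr (2 * \<eta>) * measure lebesgue St" by simp
qed


end
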